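(* Given the ability to perform incoherent unitaries, computational basis measurements and classical control (supplemented with an arbitrary ancillary state), it is impossible to implement $n$ Hadamards $H^{\otimes n}$ $\epsilon$-approximately with non-zero probability for $0\le \epsilon < 1-2^{-n}$. In particular, a single Hadamard cannot be implemented $\epsilon$-approximately with non-zero probability for $0\le\epsilon<\tfrac12$.
   Context: Fix the computational basis $\{|x\rangle\}$. A unitary is incoherent if it has the form $U=\sum_x e^{i\theta_x}|\pi(x)\rangle\langle x|$ for real $\theta_x$ and a permutation $\pi$. Such operations with an ancilla $\tau$ are modelled as channels $\rho\mapsto \mathrm{Tr}_2\big(U(\rho\otimes\tau)U^\dagger\big)$ with $U$ incoherent, or probabilistically as convex combinations of normalised subchannels $\rho\mapsto \alpha\,\mathrm{Tr}_X\big((I\otimes|x\rangle\langle x|)\,U(\rho\otimes\tau)U^\dagger\big)$ with $\alpha$ independent of $\rho$. A channel $\mathcal{E}$ $\epsilon$-approximates $\mathcal{V}$ if the induced trace distance $\max_\rho \tfrac12\|\mathcal{E}(\rho)-\mathcal{V}(\rho)\|_1\le\epsilon$. *)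

theory Defs
  imports "Jordan_Normal_Form.Jordan_Normal_Form"
begin

text \<open>Composite systems use the Kronecker ordering: basis index (i, a) of
  a d-dimensional system tensored with an m-dimensional one is i * m + a.\<close>

definition adj :: "complex mat \<Rightarrow> complex mat" where
  "adj A = mat (dim_col A) (dim_row A) (\<lambda>(i, j). cnj (A $$ (j, i)))"

definition kron :: "complex mat \<Rightarrow> complex mat \<Rightarrow> complex mat" where
  "kron A B = mat (dim_row A * dim_row B) (dim_col A * dim_col B)
     (\<lambda>(i, j). A $$ (i div dim_row B, j div dim_col B) * B $$ (i mod dim_row B, j mod dim_col B))"

definition ketbra :: "nat \<Rightarrow> nat \<Rightarrow> complex mat" where
  "ketbra k x = mat k k (\<lambda>(i, j). if i = x \<and> j = x then 1 else 0)"

definition ptrace2 :: "nat \<Rightarrow> nat \<Rightarrow> complex mat \<Rightarrow> complex mat" where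
  "ptrace2 d m M = mat d d (\<lambda>(y, y'). \<Sum>r<m. M $$ (y * m + r, y' * m + r))"

definition mtrace :: "complex mat \<Rightarrow> complex" where
  "mtrace A = (\<Sum>i<dim_row A. A $$ (i, i))"

definition density :: "nat \<Rightarrow> complex mat \<Rightarrow> bool" where
  "density D \<rho> \<longleftrightarrow> \<rho> \<in> carrier_mat D D \<and> adj \<rho> = \<rho> \<and>
     (\<forall>v :: nat \<Rightarrow> complex. 0 \<le> Re (\<Sum>i<D. \<Sum>j<D. cnj (v i) * \<rho> $$ (i, j) * v j)) \<and>
     mtrace \<rho> = 1"

definition incoherent_unitary :: "nat \<Rightarrow> complex mat \<Rightarrow> bool" where
  "incoherent_unitary D U \<longleftrightarrow>
     (\<exists>\<pi> (\<theta> :: nat \<Rightarrow> real). bij_betw \<pi> {..<D} {..<D} \<and>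
        U = mat D D (\<lambda>(i, j). if i = \<pi> j then exp (\<i> * complex_of_real (\<theta> j)) else 0))"

text \<open>Trace norm = sum of the singular values (counted with multiplicity), i.e. of the
  square roots of the eigenvalues of A^dagger A (roots of its characteristic polynomial).\<close>
definition trace_norm :: "complex mat \<Rightarrow> real" where
  "trace_norm A = (let p = char_poly (adj A * A) in
     \<Sum>e\<in>{e. poly p e = 0}. real (order e p) * sqrt (cmod e))"

text \<open>Normalised subchannel on n qubits: ancilla tau on G (x) X (dimensions g, k), incoherent
  unitary U on system (x) G (x) X, project X onto outcome |x>, trace out G and X, and rescale by a
  constant alpha (independent of rho) so that the map is trace preserving.  For g = 1 this is
  exactly alpha Tr_X((I (x) |x><x|) U (rho (x) tau) U^dagger); for k = 1 it is the deterministic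
  channel Tr_2(U (rho (x) tau) U^dagger).\<close>
definition normalised_subchannel :: "nat \<Rightarrow> (complex mat \<Rightarrow> complex mat) \<Rightarrow> bool" where
  "normalised_subchannel n E \<longleftrightarrow>
     (\<exists>g k \<tau> U x (\<alpha> :: real).
        density (g * k) \<tau> \<and> x < k \<and> incoherent_unitary (2 ^ n * (g * k)) U \<and>
        (\<forall>\<rho> \<in> carrier_mat (2 ^ n) (2 ^ n).
           E \<rho> = complex_of_real \<alpha> \<cdot>\<^sub>m ptrace2 (2 ^ n) (g * k)
                   (kron (1\<^sub>m (2 ^ n)) (kron (1\<^sub>m g) (ketbra k x)) * (U * kron \<rho> \<tau> * adj U))) \<and>
        (\<forall>\<rho>. density (2 ^ n) \<rho> \<longrightarrow> mtrace (E \<rho>) = 1))"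

text \<open>Operations implementable with non-zero probability: finite convex combinations of
  normalised subchannels.\<close>
definition implementable :: "nat \<Rightarrow> (complex mat \<Rightarrow> complex mat) \<Rightarrow> bool" where
  "implementable n E \<longleftrightarrow>
     (\<exists>(N :: nat) (p :: nat \<Rightarrow> real) (F :: nat \<Rightarrow> complex mat \<Rightarrow> complex mat).
        (\<forall>i<N. 0 \<le> p i \<and> normalised_subchannel n (F i)) \<and> (\<Sum>i<N. p i) = 1 \<and>
        (\<forall>\<rho> \<in> carrier_mat (2 ^ n) (2 ^ n).
           E \<rho> = mat (2 ^ n) (2 ^ n) (\<lambda>(a, b). \<Sum>i<N. complex_of_real (p i) * F i \<rho> $$ (a, b))))"

definition hadamard1 :: "complex mat" where
  "hadamard1 = mat 2 2 (\<lambda>(i, j). if i = 1 \<and> j = 1 then - 1 / complex_of_real (sqrt 2)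
                                    else 1 / complex_of_real (sqrt 2))"

fun hadamard_n :: "nat \<Rightarrow> complex mat" where
  "hadamard_n 0 = 1\<^sub>m 1"
| "hadamard_n (Suc n) = kron hadamard1 (hadamard_n n)"

definition approximates :: "nat \<Rightarrow> real \<Rightarrow> (complex mat \<Rightarrow> complex mat) \<Rightarrow> (complex mat \<Rightarrow> complex mat) \<Rightarrow> bool" where
  "approximates n \<epsilon> E V \<longleftrightarrow>
     (\<forall>\<rho>. density (2 ^ n) \<rho> \<longrightarrow> trace_norm (E \<rho> - V \<rho>) / 2 \<le> \<epsilon>)"

end

theory Submission
  imports Defs "Jordan_Normal_Form.Schur_Decomposition"
begin

lemma sum_split_mult: "(\<Sum>t<(b::nat)*d. (f t :: 'a::comm_monoid_add)) = (\<Sum>s<b. \<Sum>u<d. f (s*d+u))"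
proof (induction b)
  case 0 then show ?case by simp
next
  case (Suc b)
  have eq: "{..<Suc b * d} = {..<b*d} \<union> {b*d..<b*d+d}" by auto
  have "(\<Sum>t<Suc b*d. f t) = sum f ({..<b*d} \<union> {b*d..<b*d+d})" by (simp only: eq)
  also have "\<dots> = sum f {..<b*d} + sum f {b*d..<b*d+d}" by (rule sum.union_disjoint) auto
  also have "sum f {b*d..<b*d+d} = (\<Sum>u\<in>{0..<d}. f (u+b*d))"
    using sum.shift_bounds_nat_ivl[of f 0 "b*d" d] by (simp add: add.commute)
  also have "\<dots> = (\<Sum>u<d. f (b*d+u))" by (simp add: atLeast0LessThan add.commute)
  finally show ?case using Suc by simp
qed

lemma adj_dim[simp]: "dim_row (adj A) = dim_col A" "dim_col (adj A) = dim_row A"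
  by (auto simp: adj_def)
lemma adj_index[simp]: "i < dim_col A \<Longrightarrow> j < dim_row A \<Longrightarrow> adj A $$ (i,j) = cnj (A $$ (j,i))"
  by (auto simp: adj_def)
lemma adj_carrier[simp]: "A \<in> carrier_mat n m \<Longrightarrow> adj A \<in> carrier_mat m n"
  by (metis adj_dim carrier_matD carrier_matI)
lemma adj_adj[simp]: "adj (adj A) = A"
  by (rule eq_matI) auto
lemma adj_mult: assumes "A \<in> carrier_mat n m" "B \<in> carrier_mat m p"
  shows "adj (A * B) = adj B * adj A"
  apply (rule eq_matI)
  using assms by (auto simp: index_mult_mat scalar_prod_def row_def col_def mult.commute)
lemma adj_one[simp]: "adj (1\<^sub>m n) = 1\<^sub>m n"
  by (rule eq_matI) auto
lemma adj_minus: assumes "A \<in> carrier_mat n m" "B \<in> carrier_mat n m"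
  shows "adj (A - B) = adj A - adj B"
  apply (rule eq_matI) using assms by auto
lemma adj_ketbra[simp]: "adj (ketbra k x) = ketbra k x"
  by (rule eq_matI) (auto simp: ketbra_def)
lemma ketbra_carrier[simp]: "ketbra k x \<in> carrier_mat k k"
  by (auto simp: ketbra_def)

lemma kron_dim[simp]: "dim_row (kron A B) = dim_row A * dim_row B" "dim_col (kron A B) = dim_col A * dim_col B"
  by (auto simp: kron_def)
lemma kron_carrier[simp]: "A \<in> carrier_mat a b \<Longrightarrow> B \<in> carrier_mat c d \<Longrightarrow> kron A B \<in> carrier_mat (a*c) (b*d)"
  by (metis kron_dim carrier_matD carrier_matI)
lemma kron_index: "i < dim_row A * dim_row B \<Longrightarrow> j < dim_col A * dim_col B \<Longrightarrow>
  kron A B $$ (i,j) = A $$ (i div dim_row B, j div dim_col B) * B $$ (i mod dim_row B, j mod dim_col B)"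
  by (auto simp: kron_def)

lemma div_lt_mult: "(i::nat) < a * b \<Longrightarrow> i div b < a"
  by (simp add: less_mult_imp_div_less)
lemma mod_lt_mult: "(i::nat) < a * b \<Longrightarrow> i mod b < b"
  by (metis mod_less_divisor mult_0_right not_less_zero gr0I)

lemma adj_kron: "adj (kron A B) = kron (adj A) (adj B)"
  apply (rule eq_matI)
  by (auto simp: kron_index div_lt_mult mod_lt_mult)

lemma mult_entry: "A \<in> carrier_mat n m \<Longrightarrow> B \<in> carrier_mat m p \<Longrightarrow> i < n \<Longrightarrow> j < p \<Longrightarrow>
  (A * B) $$ (i,j) = (\<Sum>k<m. A $$ (i,k) * B $$ (k,j))"
  by (simp add: index_mult_mat scalar_prod_def row_def col_def atLeast0LessThan)

lemma kron_mult:
  assumes A: "A \<in> carrier_mat a b" and B: "B \<in> carrier_mat c d"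
    and C: "C \<in> carrier_mat b e" and D: "D \<in> carrier_mat d f"
  shows "kron A B * kron C D = kron (A * C) (B * D)"
proof (rule eq_matI)
  fix i j assume i: "i < dim_row (kron (A * C) (B * D))" and j: "j < dim_col (kron (A * C) (B * D))"
  then have i': "i < a * c" and j': "j < e * f" using A B C D by auto
  have c0: "c > 0" and f0: "f > 0" using i' j' by (auto intro!: gr0I)
  have "(kron A B * kron C D) $$ (i,j) = (\<Sum>t<b*d. kron A B $$ (i,t) * kron C D $$ (t,j))"
    using A B C D i' j' by (intro mult_entry[of _ "a*c" "b*d" _ "e*f"]) auto
  also have "\<dots> = (\<Sum>s<b. \<Sum>u<d. kron A B $$ (i,s*d+u) * kron C D $$ (s*d+u,j))"
    by (rule sum_split_mult)
  also have "\<dots> = (\<Sum>s<b. \<Sum>u<d. (A $$ (i div c, s) * C $$ (s, j div f)) * (B $$ (i mod c, u) * D $$ (u, j mod f)))"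
  proof (intro sum.cong refl)
    fix s u assume s: "s \<in> {..<b}" and u: "u \<in> {..<d}"
    have "s*d+u < s*d+d" using u by simp
    also have "s*d+d = Suc s * d" by simp
    also have "\<dots> \<le> b*d" using s by (intro mult_le_mono1) simp
    finally have lt: "s*d+u < b*d" .
    have dd: "(s*d+u) div d = s" "(s*d+u) mod d = u" using u by auto
    show "kron A B $$ (i,s*d+u) * kron C D $$ (s*d+u,j) = (A $$ (i div c, s) * C $$ (s, j div f)) * (B $$ (i mod c, u) * D $$ (u, j mod f))"
      using A B C D i' j' lt u by (simp add: kron_index dd)
  qed
  also have "\<dots> = (\<Sum>s<b. A $$ (i div c, s) * C $$ (s, j div f)) * (\<Sum>u<d. B $$ (i mod c, u) * D $$ (u, j mod f))"
    by (rule sum_product[symmetric])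
  also have "\<dots> = (A * C) $$ (i div c, j div f) * (B * D) $$ (i mod c, j mod f)"
    using A B C D div_lt_mult[OF i'] div_lt_mult[OF j'] mod_lt_mult[OF i'] mod_lt_mult[OF j']
    by (simp only: mult_entry[of A a b C e] mult_entry[of B c d D f])
  also have "\<dots> = kron (A * C) (B * D) $$ (i,j)"
  proof -
    have "dim_row (B*D) = c" "dim_col (B*D) = f" "dim_row (A*C) = a" "dim_col (A*C) = e" using A B C D by auto
    then show ?thesis using i' j' by (simp only: kron_index)
  qed
  finally show "(kron A B * kron C D) $$ (i,j) = kron (A * C) (B * D) $$ (i,j)" .
qed (insert assms, auto)

lemma kron_one: "kron (1\<^sub>m a) (1\<^sub>m b) = 1\<^sub>m (a*b)"
proof (rule eq_matI)
  fix i j assume "i < dim_row (1\<^sub>m (a*b))" "j < dim_col (1\<^sub>m (a*b))"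
  then have i: "i < a*b" and j: "j < a*b" by auto
  have iff: "(i div b = j div b \<and> i mod b = j mod b) = (i = j)"
    by (metis div_mult_mod_eq)
  have "kron (1\<^sub>m a) (1\<^sub>m b) $$ (i,j) = 1\<^sub>m a $$ (i div b, j div b) * 1\<^sub>m b $$ (i mod b, j mod b)"
    using i j by (simp add: kron_index)
  also have "\<dots> = (if i div b = j div b \<and> i mod b = j mod b then 1 else 0)"
    using i j div_lt_mult[OF i] div_lt_mult[OF j] mod_lt_mult[OF i] mod_lt_mult[OF j] by (simp only: index_one_mat) simp
  also have "\<dots> = 1\<^sub>m (a*b) $$ (i,j)" using i j iff by simp
  finally show "kron (1\<^sub>m a) (1\<^sub>m b) $$ (i,j) = 1\<^sub>m (a*b) $$ (i,j)" .
qed auto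

lemma h1_carrier[simp]: "hadamard1 \<in> carrier_mat 2 2"
  by (simp add: hadamard1_def)

lemma h1_dim[simp]: "dim_row hadamard1 = 2" "dim_col hadamard1 = 2"
  by (simp_all add: hadamard1_def)

lemma h1_index: "i < 2 \<Longrightarrow> j < 2 \<Longrightarrow> hadamard1 $$ (i,j) = (if i = 1 \<and> j = 1 then - 1 / complex_of_real (sqrt 2)
                                    else 1 / complex_of_real (sqrt 2))"
  by (simp add: hadamard1_def)

lemma less2: "(i::nat) < 2 \<longleftrightarrow> i = 0 \<or> i = 1" by auto

lemma h1_adj: "adj hadamard1 = hadamard1"
proof (rule eq_matI)
  fix i j assume "i < dim_row hadamard1" "j < dim_col hadamard1"
  then have i: "i < 2" and j: "j < 2" by auto
  then show "adj hadamard1 $$ (i, j) = hadamard1 $$ (i, j)"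
    by (simp add: h1_index)
qed auto

lemma sqrt2c: "complex_of_real (sqrt 2) * complex_of_real (sqrt 2) = 2"
  by (subst of_real_mult[symmetric]) simp

lemma h1_sq: "hadamard1 * hadamard1 = 1\<^sub>m 2"
proof (rule eq_matI)
  fix i j assume "i < dim_row (1\<^sub>m 2)" "j < dim_col (1\<^sub>m 2)"
  then have i: "i < 2" and j: "j < 2" by auto
  have s: "(\<Sum>k = 0..<2. f k) = f 0 + f (1::nat)" for f :: "nat \<Rightarrow> complex"
    by (simp add: numeral_2_eq_2)
  have "(hadamard1 * hadamard1) $$ (i,j) = hadamard1 $$ (i,0) * hadamard1 $$ (0,j) + hadamard1 $$ (i,1) * hadamard1 $$ (1,j)"
    using mult_entry[OF h1_carrier h1_carrier i j] by (simp add: numeral_2_eq_2)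
  also have "\<dots> = 1\<^sub>m 2 $$ (i,j)"
  proof -
    have q: "1 / complex_of_real (sqrt 2) * (1 / complex_of_real (sqrt 2)) = 1/2"
      using sqrt2c by (metis divide_divide_eq_left' div_by_1 times_divide_eq_right mult_1 times_divide_eq_left)
    from i j show ?thesis unfolding less2 by (elim disjE) (simp_all add: h1_index q sqrt2c)
  qed
  finally show "(hadamard1 * hadamard1) $$ (i,j) = 1\<^sub>m 2 $$ (i,j)" .
qed auto

lemma h1_norm: "i < 2 \<Longrightarrow> j < 2 \<Longrightarrow> (cmod (hadamard1 $$ (i,j)))\<^sup>2 = 1/2"
  by (auto simp: h1_index norm_divide power_divide)

lemma hn_carrier[simp]: "hadamard_n n \<in> carrier_mat (2^n) (2^n)"
  by (induction n) auto

lemma hn_adj: "adj (hadamard_n n) = hadamard_n n"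
  by (induction n) (auto simp: adj_kron h1_adj)

lemma hn_sq: "hadamard_n n * hadamard_n n = 1\<^sub>m (2^n)"
proof (induction n)
  case 0 then show ?case by simp
next
  case (Suc n)
  have "hadamard_n (Suc n) * hadamard_n (Suc n) = kron (hadamard1 * hadamard1) (hadamard_n n * hadamard_n n)"
    by (simp add: kron_mult[OF h1_carrier hn_carrier h1_carrier hn_carrier])
  also have "\<dots> = 1\<^sub>m (2^Suc n)" by (simp add: h1_sq Suc kron_one)
  finally show ?case .
qed

lemma hn_norm: "i < 2^n \<Longrightarrow> j < 2^n \<Longrightarrow> (cmod (hadamard_n n $$ (i,j)))\<^sup>2 = 1/2^n"
proof (induction n arbitrary: i j)
  case 0 then show ?case by simp
next
  case (Suc n)
  have d: "dim_row (hadamard_n n) = 2^n" "dim_col (hadamard_n n) = 2^n"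
    using hn_carrier[of n] by (auto simp del: hn_carrier)
  have i: "i < 2 * 2^n" and j: "j < 2 * 2^n" using Suc.prems by auto
  have "hadamard_n (Suc n) $$ (i,j) = hadamard1 $$ (i div 2^n, j div 2^n) * hadamard_n n $$ (i mod 2^n, j mod 2^n)"
    using i j by (simp add: kron_index d)
  then have "(cmod (hadamard_n (Suc n) $$ (i,j)))\<^sup>2 = (cmod (hadamard1 $$ (i div 2^n, j div 2^n)))\<^sup>2 * (cmod (hadamard_n n $$ (i mod 2^n, j mod 2^n)))\<^sup>2"
    by (simp add: norm_mult power_mult_distrib)
  also have "\<dots> = 1/2 * (1/2^n)"
    using div_lt_mult[OF i] div_lt_mult[OF j] mod_lt_mult[OF i] mod_lt_mult[OF j]
    by (simp add: h1_norm Suc.IH)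
  finally show ?case by simp
qed

lemma cprod_self: "(v::complex vec) \<bullet>c v = complex_of_real (\<Sum>k<dim_vec v. (cmod (v $ k))\<^sup>2)"
proof -
  have "v \<bullet>c v = (\<Sum>i<dim_vec v. v$i * cnj (v$i))" by (simp add: scalar_prod_def atLeast0LessThan)
  also have "\<dots> = (\<Sum> i<dim_vec v. complex_of_real ((cmod (v$i))\<^sup>2))"
    by (intro sum.cong refl) (rule complex_norm_square[symmetric])
  also have "\<dots> = complex_of_real (\<Sum>k<dim_vec v. (cmod (v $ k))\<^sup>2)" by (rule of_real_sum[symmetric])
  finally show ?thesis .
qed

lemma adjmult_entry: "U \<in> carrier_mat n m \<Longrightarrow> V \<in> carrier_mat n p \<Longrightarrow> i < m \<Longrightarrow> j < p \<Longrightarrow>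
  (adj U * V) $$ (i,j) = (\<Sum>k<n. cnj (U $$ (k,i)) * V $$ (k,j))"
  by (subst mult_entry[of _ m n _ p]) auto

lemma unitary_ext:
  assumes v: "v \<in> carrier_vec n" and v0: "v \<noteq> 0\<^sub>v n"
  shows "\<exists>W c. W \<in> carrier_mat n n \<and> adj W * W = 1\<^sub>m n \<and> c \<noteq> 0 \<and> (\<forall>i<n. W $$ (i,0) = c * v $ i)"
proof -
  interpret cof_vec_space n "TYPE(complex)" .
  define b where "b = basis_completion v"
  define ws where "ws = gram_schmidt n b"
  from basis_completion[OF v v0, folded b_def]
  have dist_b: "distinct b" and indep: "\<not> lin_dep (set b)" and b: "set b \<subseteq> carrier_vec n" and hdb: "hd b = v"
    and len_b: "length b = n" by auto
  have n: "n \<noteq> 0" using v v0 by (auto intro!: eq_vecI)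
  from hdb len_b n obtain vs where bv: "b = v # vs" by (cases b, auto)
  from gram_schmidt_result[OF b dist_b indep refl, folded ws_def]
  have ws: "set ws \<subseteq> carrier_vec n" "corthogonal ws" "length ws = n"
    by (auto simp: len_b)
  from gram_schmidt_hd[OF v, of vs, folded bv] have hdws: "hd ws = v" unfolding ws_def .
  have ws0: "ws ! 0 = v" using hdws ws(3) n by (cases ws) auto
  have wsc: "ws ! j \<in> carrier_vec n" if "j < n" for j using ws that by auto
  define c where "c j = sqrt (Re (ws ! j \<bullet>c ws ! j))" for j
  have nz: "ws ! j \<bullet>c ws ! j \<noteq> 0" if "j < n" for j using ws(2) ws(3) that by (auto simp: corthogonal_def)
  have cc: "complex_of_real (c j) * complex_of_real (c j) = ws ! j \<bullet>c ws ! j" and cpos: "c j > 0" if "j < n" for j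
  proof -
    have e: "ws ! j \<bullet>c ws ! j = complex_of_real (\<Sum>k<n. (cmod (ws ! j $ k))\<^sup>2)"
      using cprod_self[of "ws ! j"] carrier_vecD[OF wsc[OF that]] by metis
    have "(\<Sum>k<n. (cmod (ws ! j $ k))\<^sup>2) \<ge> 0" by (auto intro: sum_nonneg)
    moreover have "(\<Sum>k<n. (cmod (ws ! j $ k))\<^sup>2) \<noteq> 0" using nz[OF that] e by (metis of_real_0)
    ultimately have p: "(\<Sum>k<n. (cmod (ws ! j $ k))\<^sup>2) > 0" by linarith
    show "complex_of_real (c j) * complex_of_real (c j) = ws ! j \<bullet>c ws ! j"
      unfolding c_def e using p by (simp flip: of_real_mult)
    show "c j > 0" unfolding c_def e using p by simp
  qed
  define W where "W = mat n n (\<lambda>(i,j). ws ! j $ i / complex_of_real (c j))"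
  have W: "W \<in> carrier_mat n n" by (simp add: W_def)
  have "adj W * W = 1\<^sub>m n"
  proof (rule eq_matI)
    fix i j assume "i < dim_row (1\<^sub>m n)" "j < dim_col (1\<^sub>m n)"
    then have i: "i < n" and j: "j < n" by auto
    have "(adj W * W) $$ (i,j) = (\<Sum>k<n. cnj (W $$ (k,i)) * W $$ (k,j))"
      by (rule adjmult_entry[OF W W i j])
    also have "\<dots> = (\<Sum>k<n. ws ! j $ k * cnj (ws ! i $ k)) / (complex_of_real (c i) * complex_of_real (c j))"
      using i j by (simp add: W_def sum_divide_distrib field_simps)
    also have "(\<Sum>k<n. ws ! j $ k * cnj (ws ! i $ k)) = ws ! j \<bullet>c ws ! i"
      using wsc[OF i] wsc[OF j] by (simp add: scalar_prod_def atLeast0LessThan)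
    also have "\<dots> / (complex_of_real (c i) * complex_of_real (c j)) = 1\<^sub>m n $$ (i,j)"
    proof (cases "i = j")
      case True
      then show ?thesis using cc[OF i] nz[OF i] i by simp
    next
      case False
      then have "ws ! j \<bullet>c ws ! i = 0" using ws(2) ws(3) i j by (auto simp: corthogonal_def)
      then show ?thesis using False i j by simp
    qed
    finally show "(adj W * W) $$ (i,j) = 1\<^sub>m n $$ (i,j)" .
  qed (use W in auto)
  moreover have "\<forall>i<n. W $$ (i,0) = (1 / complex_of_real (c 0)) * v $ i"
    using n by (simp add: W_def ws0)
  moreover have "1 / complex_of_real (c 0) \<noteq> 0" using cpos[of 0] n by simp
  ultimately show ?thesis using W by blast
qed

definition dmat :: "nat \<Rightarrow> (nat \<Rightarrow> real) \<Rightarrow> complex mat" where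
  "dmat n l = mat n n (\<lambda>(i,j). if i = j then complex_of_real (l i) else 0)"

lemma dmat_carrier[simp]: "dmat n l \<in> carrier_mat n n" by (simp add: dmat_def)

lemma mult_dmat_entry: assumes U: "U \<in> carrier_mat n n" and i: "i < n" and k: "k < n"
  shows "(U * dmat n l) $$ (i,k) = U $$ (i,k) * complex_of_real (l k)"
proof -
  have "(U * dmat n l) $$ (i,k) = (\<Sum>t<n. U $$ (i,t) * dmat n l $$ (t,k))"
    by (rule mult_entry[OF U dmat_carrier i k])
  also have "\<dots> = (\<Sum>t<n. if t = k then U $$ (i,k) * complex_of_real (l k) else 0)"
    by (intro sum.cong refl) (use k in \<open>auto simp: dmat_def\<close>)
  also have "\<dots> = U $$ (i,k) * complex_of_real (l k)" using k by simp
  finally show ?thesis .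
qed

lemma udu_entry: assumes U: "U \<in> carrier_mat n n" and i: "i < n" and j: "j < n"
  shows "(U * dmat n l * adj U) $$ (i,j) = (\<Sum>k<n. U $$ (i,k) * complex_of_real (l k) * cnj (U $$ (j,k)))"
proof -
  have UD: "U * dmat n l \<in> carrier_mat n n" using U by simp
  have "(U * dmat n l * adj U) $$ (i,j) = (\<Sum>k<n. (U * dmat n l) $$ (i,k) * adj U $$ (k,j))"
    by (rule mult_entry[OF UD adj_carrier[OF U] i j])
  also have "\<dots> = (\<Sum>k<n. U $$ (i,k) * complex_of_real (l k) * cnj (U $$ (j,k)))"
    by (intro sum.cong refl) (use U i j in \<open>auto simp: mult_dmat_entry\<close>)
  finally show ?thesis .
qed

lemma assoc3: assumes "W \<in> carrier_mat n n" "V \<in> carrier_mat n n" "D \<in> carrier_mat n n"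
  shows "W * (V * D) = W * V * D"
  by (rule assoc_mult_mat[of _ n n _ n _ n, symmetric]) (use assms in simp_all)
lemma assoc5: assumes "W \<in> carrier_mat n n" "V \<in> carrier_mat n n" "D \<in> carrier_mat n n" "X \<in> carrier_mat n n" "Y \<in> carrier_mat n n"
  shows "W * (V * D * X) * Y = (W * V) * D * (X * Y)"
proof -
  have "W * (V * D * X) = W * (V * D) * X" by (rule assoc3) (use assms in simp_all)
  also have "W * (V * D) = W * V * D" by (rule assoc3) (use assms in simp_all)
  finally have "W * (V * D * X) * Y = W * V * D * X * Y" by simp
  also have "\<dots> = (W * V) * D * (X * Y)" by (rule assoc_mult_mat[of _ n n _ n _ n]) (use assms in simp_all)
  finally show ?thesis .
qed

lemma real_of_cnj: "cnj e = e \<Longrightarrow> e = complex_of_real (Re e)"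
  by (simp add: complex_eq_iff)

lemma spectral:
  assumes "A \<in> carrier_mat n n" "adj A = A"
  shows "\<exists>U l. U \<in> carrier_mat n n \<and> adj U * U = 1\<^sub>m n \<and> A = U * dmat n l * adj U"
  using assms
proof (induction n arbitrary: A)
  case 0
  have "A = 1\<^sub>m 0 * dmat 0 (\<lambda>_. 0) * adj (1\<^sub>m 0)" by (rule eq_matI) (use 0 in auto)
  then show ?case by (intro exI[of _ "1\<^sub>m 0"] exI[of _ "\<lambda>_. 0"]) auto
next
  case (Suc m A)
  let ?n = "Suc m"
  have A: "A \<in> carrier_mat ?n ?n" and hA: "adj A = A" by fact+
  obtain as where cp: "char_poly A = (\<Prod>a\<leftarrow>as. [:-a,1:])" and len: "length as = ?n"
    using char_poly_factorized[OF A] by blast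
  obtain e rest where as: "as = e # rest" using len by (cases as) auto
  have "poly (char_poly A) e = 0" unfolding cp as by simp
  then have "eigenvalue A e" using eigenvalue_root_char_poly[OF A] by simp
  then obtain v where ev: "eigenvector A v e" unfolding eigenvalue_def by blast
  then have v: "v \<in> carrier_vec ?n" and v0: "v \<noteq> 0\<^sub>v ?n" and Av: "A *\<^sub>v v = e \<cdot>\<^sub>v v"
    using A unfolding eigenvector_def by auto
  obtain W c where W: "W \<in> carrier_mat ?n ?n" and WW: "adj W * W = 1\<^sub>m ?n" and c0: "c \<noteq> 0"
    and Wc: "\<forall>i<?n. W $$ (i,0) = c * v $ i"
    using unitary_ext[OF v v0] by blast
  have aW: "adj W \<in> carrier_mat ?n ?n" using W by simp
  have WW': "W * adj W = 1\<^sub>m ?n" using mat_mult_left_right_inverse[OF aW W WW] .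
  define B where "B = adj W * (A * W)"
  have AW: "A * W \<in> carrier_mat ?n ?n" using A W by simp
  have B: "B \<in> carrier_mat ?n ?n" using aW AW by (simp add: B_def)
  have hB: "adj B = B"
  proof -
    have "adj B = adj (A * W) * adj (adj W)" unfolding B_def by (rule adj_mult[OF aW AW])
    also have "\<dots> = (adj W * adj A) * W" using adj_mult[OF A W] by simp
    also have "\<dots> = adj W * (A * W)" using hA assoc_mult_mat[OF aW A W] by simp
    finally show ?thesis unfolding B_def .
  qed
  have AWcol: "(A * W) $$ (k,0) = e * W $$ (k,0)" if k: "k < ?n" for k
  proof -
    have "(A * W) $$ (k,0) = (\<Sum>t<?n. A $$ (k,t) * W $$ (t,0))"
      by (rule mult_entry[OF A W k]) simp
    also have "\<dots> = c * (\<Sum>t<?n. A $$ (k,t) * v $ t)"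
    proof -
      have "(\<Sum>t<?n. A $$ (k,t) * W $$ (t,0)) = (\<Sum>t<?n. c * (A $$ (k,t) * v $ t))"
        by (intro sum.cong refl) (use Wc in auto)
      then show ?thesis by (simp only: sum_distrib_left)
    qed
    also have "(\<Sum>t<?n. A $$ (k,t) * v $ t) = (A *\<^sub>v v) $ k"
      using A v k by (simp add: scalar_prod_def row_def atLeast0LessThan)
    also have "\<dots> = e * v $ k" using Av v k by simp
    finally show ?thesis using Wc k by simp
  qed
  have Bcol: "B $$ (i,0) = (if i = 0 then e else 0)" if i: "i < ?n" for i
  proof -
    have "B $$ (i,0) = (\<Sum>k<?n. cnj (W $$ (k,i)) * (A * W) $$ (k,0))"
      unfolding B_def by (rule adjmult_entry[OF W AW i]) simp
    also have "\<dots> = e * (\<Sum>k<?n. cnj (W $$ (k,i)) * W $$ (k,0))"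
    proof -
      have "(\<Sum>k<?n. cnj (W $$ (k,i)) * (A * W) $$ (k,0)) = (\<Sum>k<?n. e * (cnj (W $$ (k,i)) * W $$ (k,0)))"
        by (intro sum.cong refl) (simp add: AWcol)
      then show ?thesis by (simp only: sum_distrib_left)
    qed
    also have "(\<Sum>k<?n. cnj (W $$ (k,i)) * W $$ (k,0)) = (adj W * W) $$ (i,0)"
      by (rule adjmult_entry[OF W W i, symmetric]) simp
    finally show ?thesis using WW i by simp
  qed
  have B00: "B $$ (0,0) = e" using Bcol[of 0] by simp
  have "cnj e = e" using hB B00 B by (metis adj_index carrier_matD zero_less_Suc)
  then have ereal: "e = complex_of_real (Re e)" by (rule real_of_cnj)
  have Brow: "B $$ (0,j) = (if j = 0 then e else 0)" if j: "j < ?n" for j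
  proof -
    have "B $$ (0,j) = adj B $$ (0,j)" using hB by simp
    also have "\<dots> = cnj (B $$ (j,0))" using B j by simp
    finally show ?thesis using Bcol[OF j] \<open>cnj e = e\<close> by simp
  qed
  define A3 where "A3 = mat m m (\<lambda>(i,j). B $$ (Suc i, Suc j))"
  have A3: "A3 \<in> carrier_mat m m" by (simp add: A3_def)
  have hA3: "adj A3 = A3"
  proof (rule eq_matI)
    fix i j assume "i < dim_row A3" "j < dim_col A3"
    then have i: "i < m" and j: "j < m" by (auto simp: A3_def)
    have "adj A3 $$ (i,j) = cnj (B $$ (Suc j, Suc i))" using i j by (simp add: A3_def)
    also have "\<dots> = adj B $$ (Suc i, Suc j)" using B i j by simp
    also have "\<dots> = A3 $$ (i,j)" using hB i j by (simp add: A3_def)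
    finally show "adj A3 $$ (i,j) = A3 $$ (i,j)" .
  qed (auto simp: A3_def)
  obtain U3 l3 where U3: "U3 \<in> carrier_mat m m" and UU3: "adj U3 * U3 = 1\<^sub>m m"
    and A3eq: "A3 = U3 * dmat m l3 * adj U3"
    using Suc.IH[OF A3 hA3] by blast
  define V where "V = mat ?n ?n (\<lambda>(i,j). if i = 0 \<and> j = 0 then 1 else if i = 0 \<or> j = 0 then 0 else U3 $$ (i - 1, j - 1))"
  define l where "l = (\<lambda>i. if i = 0 then Re e else l3 (i - 1))"
  have V: "V \<in> carrier_mat ?n ?n" by (simp add: V_def)
  have Vi: "V $$ (i,j) = (if i = 0 \<and> j = 0 then 1 else if i = 0 \<or> j = 0 then 0 else U3 $$ (i - 1, j - 1))"
    if "i < ?n" "j < ?n" for i j using that by (simp add: V_def)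
  have VV: "adj V * V = 1\<^sub>m ?n"
  proof (rule eq_matI)
    fix i j assume "i < dim_row (1\<^sub>m ?n)" "j < dim_col (1\<^sub>m ?n)"
    then have i: "i < ?n" and j: "j < ?n" by auto
    have "(adj V * V) $$ (i,j) = (\<Sum>k<?n. cnj (V $$ (k,i)) * V $$ (k,j))"
      by (rule adjmult_entry[OF V V i j])
    also have "\<dots> = cnj (V $$ (0,i)) * V $$ (0,j) + (\<Sum>k<m. cnj (V $$ (Suc k,i)) * V $$ (Suc k,j))"
      by (rule sum.lessThan_Suc_shift)
    also have "\<dots> = 1\<^sub>m ?n $$ (i,j)"
    proof (cases i)
      case 0
      then show ?thesis using i j by (simp add: Vi)
    next
      case (Suc i')
      note ii = Suc
      show ?thesis
      proof (cases j)
        case 0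
        then show ?thesis using i j ii by (simp add: Vi)
      next
        case (Suc j')
        have "(\<Sum>k<m. cnj (V $$ (Suc k,i)) * V $$ (Suc k,j)) = (\<Sum>k<m. cnj (U3 $$ (k,i')) * U3 $$ (k,j'))"
          by (intro sum.cong refl) (use i j ii Suc in \<open>simp add: Vi\<close>)
        also have "\<dots> = (adj U3 * U3) $$ (i',j')"
          using i j ii Suc by (intro adjmult_entry[OF U3 U3, symmetric]) auto
        finally show ?thesis using i j ii Suc UU3 by (simp add: Vi)
      qed
    qed
    finally show "(adj V * V) $$ (i,j) = 1\<^sub>m ?n $$ (i,j)" .
  qed (use V in auto)
  have BV: "B = V * dmat ?n l * adj V"
  proof (rule eq_matI)
    fix i j assume "i < dim_row (V * dmat ?n l * adj V)" "j < dim_col (V * dmat ?n l * adj V)"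
    then have i: "i < ?n" and j: "j < ?n" using V by auto
    have "(V * dmat ?n l * adj V) $$ (i,j) = (\<Sum>k<?n. V $$ (i,k) * complex_of_real (l k) * cnj (V $$ (j,k)))"
      by (rule udu_entry[OF V i j])
    also have "\<dots> = V $$ (i,0) * complex_of_real (l 0) * cnj (V $$ (j,0)) + (\<Sum>k<m. V $$ (i,Suc k) * complex_of_real (l (Suc k)) * cnj (V $$ (j,Suc k)))"
      by (rule sum.lessThan_Suc_shift)
    also have "\<dots> = B $$ (i,j)"
    proof (cases i)
      case 0
      then show ?thesis using i j Brow[OF j] ereal by (auto simp: Vi l_def)
    next
      case (Suc i')
      note ii = Suc
      show ?thesis
      proof (cases j)
        case 0
        then show ?thesis using i j ii Bcol[OF i] by (simp add: Vi)
      next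
        case (Suc j')
        have "(\<Sum>k<m. V $$ (i,Suc k) * complex_of_real (l (Suc k)) * cnj (V $$ (j,Suc k))) = (\<Sum>k<m. U3 $$ (i',k) * complex_of_real (l3 k) * cnj (U3 $$ (j',k)))"
          by (intro sum.cong refl) (use i j ii Suc in \<open>simp add: Vi l_def\<close>)
        also have "\<dots> = A3 $$ (i',j')"
          unfolding A3eq using i j ii Suc by (intro udu_entry[OF U3, symmetric]) auto
        also have "\<dots> = B $$ (i,j)" using i j ii Suc by (simp add: A3_def)
        finally show ?thesis using i j ii Suc by (simp add: Vi)
      qed
    qed
    finally show "B $$ (i,j) = (V * dmat ?n l * adj V) $$ (i,j)" by simp
  qed (use V B in auto)
  define U where "U = W * V"
  have U: "U \<in> carrier_mat ?n ?n" using W V by (simp add: U_def)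
  have aV: "adj V \<in> carrier_mat ?n ?n" using V by simp
  have adjU: "adj U = adj V * adj W" unfolding U_def by (rule adj_mult[OF W V])
  have "adj U * U = adj V * (adj W * (W * V))"
    unfolding adjU unfolding U_def using aV aW W V
    by (simp add: assoc_mult_mat[of _ ?n ?n _ ?n _ ?n] mult_carrier_mat)
  also have "adj W * (W * V) = V" using assoc_mult_mat[OF aW W V] WW V by simp
  also have "adj V * V = 1\<^sub>m ?n" by (rule VV)
  finally have UU: "adj U * U = 1\<^sub>m ?n" .
  have "W * B * adj W = W * (adj W * A * W) * adj W"
    unfolding B_def using assoc3[OF aW A W] by simp
  also have "\<dots> = (W * adj W) * A * (W * adj W)" by (rule assoc5[OF W aW A W aW])
  also have "\<dots> = A" using WW' A by simp
  finally have "A = W * B * adj W" by simp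
  also have "\<dots> = W * (V * dmat ?n l * adj V) * adj W" using BV by simp
  also have "\<dots> = (W * V) * dmat ?n l * (adj V * adj W)" by (rule assoc5[OF W V dmat_carrier aV aW])
  also have "\<dots> = U * dmat ?n l * adj U" unfolding adjU unfolding U_def ..
  finally show ?case using U UU by blast
qed

lemma lin_prod_nz: "(\<Prod>a\<leftarrow>xs. [:-a,1:]) \<noteq> (0::complex poly)"
  by (auto simp: prod_list_zero_iff)

lemma order_sum_gen:
  fixes xs :: "complex list"
  assumes "finite S" "{e. poly (\<Prod>a\<leftarrow>xs. [:-a,1:]) e = 0} \<subseteq> S"
  shows "(\<Sum>e\<in>S. real (Polynomial.order e (\<Prod>a\<leftarrow>xs. [:-a,1:])) * f e) = sum_list (map f xs)"
  using assms(2)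
proof (induction xs)
  case Nil
  then show ?case by simp
next
  case (Cons a xs)
  let ?q = "\<Prod>a\<leftarrow>xs. [:-a,1:]"
  have q0: "?q \<noteq> 0" by (rule lin_prod_nz)
  have p0: "[:-a,1:] * ?q \<noteq> 0" using lin_prod_nz[of "a#xs"] by simp
  have sub: "{e. poly ?q e = 0} \<subseteq> S" using Cons.prems by auto
  have aS: "a \<in> S" using Cons.prems by auto
  have "(\<Sum>e\<in>S. real (Polynomial.order e (\<Prod>a\<leftarrow>a#xs. [:-a,1:])) * f e)
      = (\<Sum>e\<in>S. (if e = a then f e else 0) + real (Polynomial.order e ?q) * f e)"
  proof (intro sum.cong refl)
    fix e assume "e \<in> S"
    have "Polynomial.order e (\<Prod>a\<leftarrow>a#xs. [:-a,1:]) = Polynomial.order e [:-a,1:] + Polynomial.order e ?q"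
      using order_mult[OF p0] by simp
    moreover have "Polynomial.order e [:-a,1:] = (if e = a then 1 else 0)"
      using order_linear'[of e "-a"] by auto
    ultimately show "real (Polynomial.order e (\<Prod>a\<leftarrow>a#xs. [:-a,1:])) * f e = (if e = a then f e else 0) + real (Polynomial.order e ?q) * f e"
      by (simp add: distrib_right)
  qed
  also have "\<dots> = f a + (\<Sum>e\<in>S. real (Polynomial.order e ?q) * f e)"
    using assms(1) aS by (simp add: sum.distrib)
  also have "\<dots> = f a + sum_list (map f xs)" using Cons.IH[OF sub] by simp
  finally show ?case by simp
qed

lemma order_sum:
  fixes xs :: "complex list"
  shows "(\<Sum>e\<in>{e. poly (\<Prod>a\<leftarrow>xs. [:-a,1:]) e = 0}. real (Polynomial.order e (\<Prod>a\<leftarrow>xs. [:-a,1:])) * f e) = sum_list (map f xs)"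
proof (rule order_sum_gen)
  have "(\<Prod>a\<leftarrow>xs. [:-a,1:]) \<noteq> (0 :: complex poly)" by (rule lin_prod_nz)
  then show "finite {e. poly (\<Prod>a\<leftarrow>xs. [:-a,1:]) e = 0}" by (rule poly_roots_finite)
qed simp

lemma sum_list_map_upt: "sum_list (map f (map c [0..<n])) = (\<Sum>k<n. f (c k))"
  by (induction n) auto

lemma dmat_sq: "dmat n l * dmat n l = dmat n (\<lambda>k. (l k)^2)"
proof (rule eq_matI)
  fix i j assume "i < dim_row (dmat n (\<lambda>k. (l k)^2))" "j < dim_col (dmat n (\<lambda>k. (l k)^2))"
  then have i: "i < n" and j: "j < n" by (auto simp: dmat_def)
  show "(dmat n l * dmat n l) $$ (i,j) = dmat n (\<lambda>k. (l k)^2) $$ (i,j)"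
    using mult_dmat_entry[OF dmat_carrier i j] i j by (simp add: dmat_def power2_eq_square)
qed (auto simp: dmat_def)

lemma trace_norm_herm:
  assumes A: "A \<in> carrier_mat n n" and hA: "adj A = A" and U: "U \<in> carrier_mat n n" and UU: "adj U * U = 1\<^sub>m n"
    and Aeq: "A = U * dmat n l * adj U"
  shows "trace_norm A = (\<Sum>k<n. \<bar>l k\<bar>)"
proof -
  let ?D = "dmat n l"
  let ?D2 = "dmat n (\<lambda>k. (l k)^2)"
  have aU: "adj U \<in> carrier_mat n n" using U by simp
  have D: "?D \<in> carrier_mat n n" by simp
  have UU': "U * adj U = 1\<^sub>m n" using mat_mult_left_right_inverse[OF aU U UU] .
  define X where "X = U * ?D"
  have X: "X \<in> carrier_mat n n" using U by (simp add: X_def)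
  have AX: "A = X * adj U" using Aeq by (simp add: X_def)
  have aUX: "adj U * X = ?D" unfolding X_def using assoc3[OF aU U D] UU left_mult_one_mat[OF D] by simp
  have "A * A = X * (adj U * (X * adj U))" unfolding AX
    by (rule assoc_mult_mat[OF X aU, of _ n]) (use X aU in simp)
  also have "adj U * (X * adj U) = ?D * adj U" using assoc3[OF aU X aU] aUX by simp
  also have "X * (?D * adj U) = X * ?D * adj U" by (rule assoc3[OF X D aU])
  also have "X * ?D = U * ?D2" unfolding X_def using assoc_mult_mat[OF U D D] dmat_sq by simp
  finally have AA: "A * A = U * ?D2 * adj U" .
  have sim: "similar_mat (A * A) ?D2"
    unfolding similar_mat_def
    by (rule exI[of _ U], rule exI[of _ "adj U"], rule similar_mat_witI[of _ _ n]) (use UU UU' AA U aU A in auto)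
  have ut: "upper_triangular ?D2" by (auto simp: upper_triangular_def dmat_def)
  have dg: "diag_mat ?D2 = map (\<lambda>k. complex_of_real ((l k)^2)) [0..<n]"
    by (auto simp: diag_mat_def dmat_def)
  have cp: "char_poly (adj A * A) = (\<Prod>a\<leftarrow>map (\<lambda>k. complex_of_real ((l k)^2)) [0..<n]. [:-a,1:])"
    using char_poly_similar[OF sim] char_poly_upper_triangular[OF dmat_carrier ut] hA dg by simp
  have "trace_norm A = sum_list (map (\<lambda>e. sqrt (cmod e)) (map (\<lambda>k. complex_of_real ((l k)^2)) [0..<n]))"
    unfolding trace_norm_def Let_def cp by (rule order_sum)
  also have "\<dots> = (\<Sum>k<n. sqrt (cmod (complex_of_real ((l k)^2))))" by (rule sum_list_map_upt)
  also have "\<dots> = (\<Sum>k<n. \<bar>l k\<bar>)"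
  proof (intro sum.cong refl)
    fix k
    have "cmod (complex_of_real ((l k)^2)) = (l k)^2" by (simp only: norm_of_real) simp
    then show "sqrt (cmod (complex_of_real ((l k)^2))) = \<bar>l k\<bar>" by simp
  qed
  finally show ?thesis .
qed

lemma diag_le_trace_norm:
  assumes A: "A \<in> carrier_mat n n" and hA: "adj A = A"
  shows "(\<Sum>j<n. cmod (A $$ (j,j))) \<le> trace_norm A"
proof -
  obtain U l where U: "U \<in> carrier_mat n n" and UU: "adj U * U = 1\<^sub>m n" and Aeq: "A = U * dmat n l * adj U"
    using spectral[OF A hA] by blast
  have col: "(\<Sum>j<n. (cmod (U $$ (j,k)))^2) = 1" if k: "k < n" for k
  proof -
    have "complex_of_real (\<Sum>j<n. (cmod (U $$ (j,k)))^2) = (\<Sum>j<n. complex_of_real ((cmod (U $$ (j,k)))^2))"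
      by (rule of_real_sum)
    also have "\<dots> = (\<Sum>j<n. cnj (U $$ (j,k)) * U $$ (j,k))"
      by (intro sum.cong refl) (metis complex_norm_square mult.commute)
    also have "\<dots> = (adj U * U) $$ (k,k)" by (rule adjmult_entry[OF U U k k, symmetric])
    also have "\<dots> = 1" using UU k by simp
    finally show ?thesis by (metis of_real_eq_1_iff)
  qed
  have "(\<Sum>j<n. cmod (A $$ (j,j))) \<le> (\<Sum>j<n. \<Sum>k<n. \<bar>l k\<bar> * (cmod (U $$ (j,k)))^2)"
  proof (rule sum_mono)
    fix j assume "j \<in> {..<n}"
    then have j: "j < n" by simp
    have "A $$ (j,j) = (\<Sum>k<n. U $$ (j,k) * complex_of_real (l k) * cnj (U $$ (j,k)))"
      unfolding Aeq by (rule udu_entry[OF U j j])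
    then have "cmod (A $$ (j,j)) \<le> (\<Sum>k<n. cmod (U $$ (j,k) * complex_of_real (l k) * cnj (U $$ (j,k))))"
      by (simp add: norm_sum)
    also have "\<dots> = (\<Sum>k<n. \<bar>l k\<bar> * (cmod (U $$ (j,k)))^2)"
      by (simp add: norm_mult power2_eq_square mult_ac)
    finally show "cmod (A $$ (j,j)) \<le> (\<Sum>k<n. \<bar>l k\<bar> * (cmod (U $$ (j,k)))^2)" .
  qed
  also have "\<dots> = (\<Sum>k<n. \<bar>l k\<bar> * (\<Sum>j<n. (cmod (U $$ (j,k)))^2))"
    by (subst sum.swap) (simp add: sum_distrib_left)
  also have "\<dots> = (\<Sum>k<n. \<bar>l k\<bar>)" by (simp add: col)
  also have "\<dots> = trace_norm A" by (rule trace_norm_herm[OF A hA U UU Aeq, symmetric])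
  finally show ?thesis .
qed

definition isdiag :: "complex mat \<Rightarrow> bool" where
  "isdiag M \<longleftrightarrow> dim_row M = dim_col M \<and> (\<forall>i<dim_row M. \<forall>j<dim_col M. i \<noteq> j \<longrightarrow> M $$ (i,j) = 0)"

lemma ketbra_dim[simp]: "dim_row (ketbra k x) = k" "dim_col (ketbra k x) = k"
  by (simp_all add: ketbra_def)

lemma isdiag_one: "isdiag (1\<^sub>m n)" by (simp add: isdiag_def)
lemma isdiag_ketbra: "isdiag (ketbra k x)" by (simp add: isdiag_def ketbra_def)

lemma isdiag_kron: assumes A: "isdiag A" and B: "isdiag B" shows "isdiag (kron A B)"
  unfolding isdiag_def
proof (intro conjI allI impI)
  show "dim_row (kron A B) = dim_col (kron A B)" using A B by (simp add: isdiag_def)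
  fix i j assume i: "i < dim_row (kron A B)" and j: "j < dim_col (kron A B)" and ij: "i \<noteq> j"
  have sq: "dim_row B = dim_col B" "dim_row A = dim_col A" using A B by (auto simp: isdiag_def)
  have i': "i < dim_row A * dim_row B" and j': "j < dim_col A * dim_col B" using i j by auto
  have j'': "j < dim_row A * dim_row B" using j' sq by simp
  have "i div dim_row B \<noteq> j div dim_row B \<or> i mod dim_row B \<noteq> j mod dim_row B"
    using ij by (metis div_mult_mod_eq)
  moreover have "i div dim_row B \<noteq> j div dim_row B \<Longrightarrow> A $$ (i div dim_row B, j div dim_row B) = 0"
    using A div_lt_mult[OF i'] div_lt_mult[OF j''] sq unfolding isdiag_def by auto
  moreover have "i mod dim_row B \<noteq> j mod dim_row B \<Longrightarrow> B $$ (i mod dim_row B, j mod dim_row B) = 0"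
    using B mod_lt_mult[OF i'] mod_lt_mult[OF j''] sq unfolding isdiag_def by auto
  ultimately show "kron A B $$ (i,j) = 0" using i' j' sq by (auto simp: kron_index)
qed

lemma diag_mult_entry:
  assumes P: "P \<in> carrier_mat m m" and dP: "isdiag P" and X: "X \<in> carrier_mat m p" and a: "a < m" and b: "b < p"
  shows "(P * X) $$ (a,b) = P $$ (a,a) * X $$ (a,b)"
proof -
  have "(P * X) $$ (a,b) = (\<Sum>t<m. P $$ (a,t) * X $$ (t,b))" by (rule mult_entry[OF P X a b])
  also have "\<dots> = (\<Sum>t<m. if t = a then P $$ (a,a) * X $$ (a,b) else 0)"
    by (intro sum.cong refl) (use P dP a in \<open>auto simp: isdiag_def\<close>)
  also have "\<dots> = P $$ (a,a) * X $$ (a,b)" using a by simp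
  finally show ?thesis .
qed

lemma kron_diag_entry: "a < dim_row A * dim_row B \<Longrightarrow> dim_row A = dim_col A \<Longrightarrow> dim_row B = dim_col B \<Longrightarrow>
  kron A B $$ (a,a) = A $$ (a div dim_row B, a div dim_row B) * B $$ (a mod dim_row B, a mod dim_row B)"
  by (simp add: kron_index)

lemma incoh_carrier: "incoherent_unitary m U \<Longrightarrow> U \<in> carrier_mat m m"
  by (auto simp: incoherent_unitary_def)

lemma incoh_diag:
  assumes U: "incoherent_unitary m U" and M: "M \<in> carrier_mat m m" and M': "M' \<in> carrier_mat m m"
    and same: "\<forall>i<m. M $$ (i,i) = M' $$ (i,i)" and a: "a < m"
  shows "(U * M * adj U) $$ (a,a) = (U * M' * adj U) $$ (a,a)"
proof -
  obtain \<pi> \<theta> where bij: "bij_betw \<pi> {..<m} {..<m}"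
    and Ueq: "U = mat m m (\<lambda>(i, j). if i = \<pi> j then exp (\<i> * complex_of_real (\<theta> j)) else 0)"
    using U unfolding incoherent_unitary_def by blast
  have Uc: "U \<in> carrier_mat m m" using Ueq by simp
  have inj: "inj_on \<pi> {..<m}" using bij by (rule bij_betw_imp_inj_on)
  have Ui: "U $$ (i,j) = (if i = \<pi> j then exp (\<i> * complex_of_real (\<theta> j)) else 0)" if "i < m" "j < m" for i j
    using that Ueq by simp
  have UMc: "(U * N) $$ (a,c) * cnj (U $$ (a,c)) = U $$ (a,c) * N $$ (c,c) * cnj (U $$ (a,c))"
    if N: "N \<in> carrier_mat m m" and c: "c < m" for N c
  proof (cases "a = \<pi> c")
    case True
    have "(U * N) $$ (a,c) = (\<Sum>b<m. U $$ (a,b) * N $$ (b,c))" by (rule mult_entry[OF Uc N a c])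
    also have "\<dots> = (\<Sum>b<m. if b = c then U $$ (a,c) * N $$ (c,c) else 0)"
    proof (intro sum.cong refl)
      fix b assume b: "b \<in> {..<m}"
      show "U $$ (a,b) * N $$ (b,c) = (if b = c then U $$ (a,c) * N $$ (c,c) else 0)"
      proof (cases "b = c")
        case False
        then have "\<pi> b \<noteq> \<pi> c" using inj b c by (auto dest: inj_onD)
        then show ?thesis using False Ui[OF a] b True by auto
      qed simp
    qed
    also have "\<dots> = U $$ (a,c) * N $$ (c,c)" using c by simp
    finally show ?thesis by simp
  next
    case False
    then show ?thesis using Ui[OF a c] by simp
  qed
  have "(U * M * adj U) $$ (a,a) = (\<Sum>c<m. (U * M) $$ (a,c) * adj U $$ (c,a))"
    by (rule mult_entry[of _ m m _ m]) (use Uc M a in auto)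
  also have "\<dots> = (\<Sum>c<m. U $$ (a,c) * M $$ (c,c) * cnj (U $$ (a,c)))"
    by (intro sum.cong refl) (use Uc a UMc[OF M] in auto)
  also have "\<dots> = (\<Sum>c<m. U $$ (a,c) * M' $$ (c,c) * cnj (U $$ (a,c)))"
    using same by simp
  also have "\<dots> = (\<Sum>c<m. (U * M') $$ (a,c) * adj U $$ (c,a))"
  proof (intro sum.cong refl)
    fix c assume "c \<in> {..<m}"
    then have c: "c < m" by simp
    show "U $$ (a,c) * M' $$ (c,c) * cnj (U $$ (a,c)) = (U * M') $$ (a,c) * adj U $$ (c,a)"
      using Uc a c by (simp add: UMc[OF M' c, symmetric])
  qed
  also have "\<dots> = (U * M' * adj U) $$ (a,a)"
    by (rule mult_entry[of _ m m _ m, symmetric]) (use Uc M' a in auto)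
  finally show ?thesis .
qed

lemma adj_sandwich: assumes U: "U \<in> carrier_mat m m" and M: "M \<in> carrier_mat m m"
  shows "adj (U * M * adj U) = U * adj M * adj U"
proof -
  have UM: "U * M \<in> carrier_mat m m" using U M by simp
  have "adj (U * M * adj U) = adj (adj U) * adj (U * M)" by (rule adj_mult[OF UM adj_carrier[OF U]])
  also have "\<dots> = U * (adj M * adj U)" using adj_mult[OF U M] by simp
  also have "\<dots> = U * adj M * adj U" by (rule assoc3[OF U adj_carrier[OF M] adj_carrier[OF U]])
  finally show ?thesis .
qed

lemma idx_bound: "(y::nat) < N \<Longrightarrow> r < D \<Longrightarrow> y * D + r < N * D"
proof -
  assume y: "y < N" and r: "r < D"
  have "y * D + r < y * D + D" using r by simp
  also have "\<dots> = Suc y * D" by simp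
  also have "\<dots> \<le> N * D" using y by (intro mult_le_mono1) simp
  finally show ?thesis .
qed

lemma subch_props:
  assumes "normalised_subchannel n F"
  shows "\<And>\<rho> \<rho>'. \<rho> \<in> carrier_mat (2^n) (2^n) \<Longrightarrow> \<rho>' \<in> carrier_mat (2^n) (2^n) \<Longrightarrow>
           (\<forall>i<2^n. \<rho> $$ (i,i) = \<rho>' $$ (i,i)) \<Longrightarrow> y < 2^n \<Longrightarrow> F \<rho> $$ (y,y) = F \<rho>' $$ (y,y)"
    and "\<And>\<rho>. density (2^n) \<rho> \<Longrightarrow> F \<rho> \<in> carrier_mat (2^n) (2^n) \<and> adj (F \<rho>) = F \<rho> \<and> mtrace (F \<rho>) = 1"
proof -
  let ?N = "2^n :: nat"
  obtain g k \<tau> U x \<alpha> where tau: "density (g * k) \<tau>" and x: "x < k"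
    and U: "incoherent_unitary (?N * (g * k)) U"
    and Feq: "\<forall>\<rho> \<in> carrier_mat ?N ?N.
           F \<rho> = complex_of_real \<alpha> \<cdot>\<^sub>m ptrace2 ?N (g * k)
                   (kron (1\<^sub>m ?N) (kron (1\<^sub>m g) (ketbra k x)) * (U * kron \<rho> \<tau> * adj U))"
    and tr: "\<forall>\<rho>. density ?N \<rho> \<longrightarrow> mtrace (F \<rho>) = 1"
    using assms unfolding normalised_subchannel_def by blast
  define D where "D = g * k"
  define Q where "Q = kron (1\<^sub>m g) (ketbra k x)"
  define P where "P = kron (1\<^sub>m ?N) Q"
  have tauc: "\<tau> \<in> carrier_mat D D" and htau: "adj \<tau> = \<tau>" using tau unfolding density_def D_def by auto
  have Qc: "Q \<in> carrier_mat D D" by (simp add: Q_def D_def)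
  have Pc: "P \<in> carrier_mat (?N * D) (?N * D)" using Qc by (simp add: P_def)
  have dP: "isdiag P" unfolding P_def Q_def by (intro isdiag_kron isdiag_one isdiag_ketbra)
  have Uc: "U \<in> carrier_mat (?N * D) (?N * D)" using incoh_carrier[OF U] by (simp add: D_def)
  have Qreal: "cnj (Q $$ (r,r)) = Q $$ (r,r)" if r: "r < D" for r
  proof -
    have r': "r < g * k" using r by (simp add: D_def)
    have "Q $$ (r,r) = 1\<^sub>m g $$ (r div k, r div k) * ketbra k x $$ (r mod k, r mod k)"
      unfolding Q_def using r' by (simp add: kron_index)
    also have "\<dots> = (if r mod k = x then 1 else 0)"
      using div_lt_mult[OF r'] mod_lt_mult[OF r'] by (simp add: ketbra_def)
    finally show ?thesis by simp
  qed
  have Pdiag: "P $$ (y * D + r, y * D + r) = Q $$ (r,r)" if y: "y < ?N" and r: "r < D" for y r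
  proof -
    have b: "y * D + r < ?N * D" by (rule idx_bound[OF y r])
    have dm: "(y * D + r) div D = y" "(y * D + r) mod D = r" using r by auto
    show ?thesis unfolding P_def using b Qc y r by (simp add: kron_index dm)
  qed
  define X where "X \<rho> = U * kron \<rho> \<tau> * adj U" for \<rho>
  have Xc: "X \<rho> \<in> carrier_mat (?N * D) (?N * D)" if "\<rho> \<in> carrier_mat ?N ?N" for \<rho>
    unfolding X_def by (rule mult_carrier_mat[OF mult_carrier_mat[OF Uc kron_carrier[OF that tauc]] adj_carrier[OF Uc]])
  have Fentry: "F \<rho> $$ (y,y') = complex_of_real \<alpha> * (\<Sum>r<D. Q $$ (r,r) * X \<rho> $$ (y * D + r, y' * D + r))"
    if rho: "\<rho> \<in> carrier_mat ?N ?N" and y: "y < ?N" and y': "y' < ?N" for \<rho> y y'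
  proof -
    have "F \<rho> $$ (y,y') = complex_of_real \<alpha> * (\<Sum>r<D. (P * X \<rho>) $$ (y * D + r, y' * D + r))"
      using Feq rho y y' by (simp add: ptrace2_def P_def Q_def X_def D_def)
    also have "(\<Sum>r<D. (P * X \<rho>) $$ (y * D + r, y' * D + r)) = (\<Sum>r<D. Q $$ (r,r) * X \<rho> $$ (y * D + r, y' * D + r))"
    proof (intro sum.cong refl)
      fix r assume "r \<in> {..<D}"
      then have r: "r < D" by simp
      show "(P * X \<rho>) $$ (y * D + r, y' * D + r) = Q $$ (r,r) * X \<rho> $$ (y * D + r, y' * D + r)"
        using diag_mult_entry[OF Pc dP Xc[OF rho] idx_bound[OF y r] idx_bound[OF y' r]] Pdiag[OF y r] by simp
    qed
    finally show ?thesis .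
  qed
  have Fc: "F \<rho> \<in> carrier_mat ?N ?N" if "\<rho> \<in> carrier_mat ?N ?N" for \<rho>
    using Feq that by (simp add: ptrace2_def)
  show "F \<rho> $$ (y,y) = F \<rho>' $$ (y,y)"
    if rho: "\<rho> \<in> carrier_mat ?N ?N" and rho': "\<rho>' \<in> carrier_mat ?N ?N"
      and same: "\<forall>i<?N. \<rho> $$ (i,i) = \<rho>' $$ (i,i)" and y: "y < ?N" for \<rho> \<rho>'
  proof -
    have Kc: "kron \<rho> \<tau> \<in> carrier_mat (?N * D) (?N * D)" "kron \<rho>' \<tau> \<in> carrier_mat (?N * D) (?N * D)"
      using rho rho' tauc by auto
    have sameK: "\<forall>a<?N * D. kron \<rho> \<tau> $$ (a,a) = kron \<rho>' \<tau> $$ (a,a)"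
    proof (intro allI impI)
      fix a assume a: "a < ?N * D"
      show "kron \<rho> \<tau> $$ (a,a) = kron \<rho>' \<tau> $$ (a,a)"
        using a rho rho' tauc same div_lt_mult[OF a] by (simp add: kron_index)
    qed
    have "\<forall>r<D. X \<rho> $$ (y * D + r, y * D + r) = X \<rho>' $$ (y * D + r, y * D + r)"
      unfolding X_def using incoh_diag[OF U[folded D_def] Kc sameK] idx_bound[OF y] by blast
    then show ?thesis using Fentry[OF rho y y] Fentry[OF rho' y y] by simp
  qed
  show "F \<rho> \<in> carrier_mat ?N ?N \<and> adj (F \<rho>) = F \<rho> \<and> mtrace (F \<rho>) = 1" if dens: "density ?N \<rho>" for \<rho>
  proof (intro conjI)
    have rho: "\<rho> \<in> carrier_mat ?N ?N" and hrho: "adj \<rho> = \<rho>" using dens unfolding density_def by auto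
    show Fc': "F \<rho> \<in> carrier_mat ?N ?N" by (rule Fc[OF rho])
    show "mtrace (F \<rho>) = 1" using tr dens by blast
    have Kc: "kron \<rho> \<tau> \<in> carrier_mat (?N * D) (?N * D)" using rho tauc by auto
    have hX: "adj (X \<rho>) = X \<rho>"
      unfolding X_def using adj_sandwich[OF Uc Kc] by (simp add: adj_kron hrho htau)
    show "adj (F \<rho>) = F \<rho>"
    proof (rule eq_matI)
      fix i j assume "i < dim_row (F \<rho>)" "j < dim_col (F \<rho>)"
      then have i: "i < ?N" and j: "j < ?N" using Fc' by auto
      have "adj (F \<rho>) $$ (i,j) = cnj (F \<rho> $$ (j,i))" using Fc' i j by simp
      also have "\<dots> = complex_of_real \<alpha> * (\<Sum>r<D. cnj (Q $$ (r,r)) * cnj (X \<rho> $$ (j * D + r, i * D + r)))"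
        using Fentry[OF rho j i] by simp
      also have "\<dots> = complex_of_real \<alpha> * (\<Sum>r<D. Q $$ (r,r) * X \<rho> $$ (i * D + r, j * D + r))"
      proof -
        have "(\<Sum>r<D. cnj (Q $$ (r,r)) * cnj (X \<rho> $$ (j * D + r, i * D + r))) = (\<Sum>r<D. Q $$ (r,r) * X \<rho> $$ (i * D + r, j * D + r))"
        proof (intro sum.cong refl)
          fix r assume "r \<in> {..<D}"
          then have r: "r < D" by simp
          have "cnj (X \<rho> $$ (j * D + r, i * D + r)) = adj (X \<rho>) $$ (i * D + r, j * D + r)"
            using Xc[OF rho] idx_bound[OF i r] idx_bound[OF j r] by simp
          then show "cnj (Q $$ (r,r)) * cnj (X \<rho> $$ (j * D + r, i * D + r)) = Q $$ (r,r) * X \<rho> $$ (i * D + r, j * D + r)"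
            using Qreal[OF r] hX by simp
        qed
        then show ?thesis by simp
      qed
      also have "\<dots> = F \<rho> $$ (i,j)" using Fentry[OF rho i j] by simp
      finally show "adj (F \<rho>) $$ (i,j) = F \<rho> $$ (i,j)" .
    qed (use Fc' in auto)
  qed
qed

lemma impl_props:
  assumes "implementable n E"
  shows "\<And>\<rho> \<rho>'. \<rho> \<in> carrier_mat (2^n) (2^n) \<Longrightarrow> \<rho>' \<in> carrier_mat (2^n) (2^n) \<Longrightarrow>
           (\<forall>i<2^n. \<rho> $$ (i,i) = \<rho>' $$ (i,i)) \<Longrightarrow> y < 2^n \<Longrightarrow> E \<rho> $$ (y,y) = E \<rho>' $$ (y,y)"
    and "\<And>\<rho>. density (2^n) \<rho> \<Longrightarrow> E \<rho> \<in> carrier_mat (2^n) (2^n) \<and> adj (E \<rho>) = E \<rho> \<and> mtrace (E \<rho>) = 1"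
proof -
  let ?N = "2^n :: nat"
  obtain Nn :: nat and p F where pF: "\<forall>i<Nn. 0 \<le> p i \<and> normalised_subchannel n (F i)" and ps: "(\<Sum>i<Nn. p i) = 1"
    and Eeq: "\<forall>\<rho> \<in> carrier_mat ?N ?N.
           E \<rho> = mat ?N ?N (\<lambda>(a, b). \<Sum>i<Nn. complex_of_real (p i) * F i \<rho> $$ (a, b))"
    using assms unfolding implementable_def by (elim exE conjE) (rule that, assumption+)
  show "E \<rho> $$ (y,y) = E \<rho>' $$ (y,y)"
    if rho: "\<rho> \<in> carrier_mat ?N ?N" and rho': "\<rho>' \<in> carrier_mat ?N ?N"
      and same: "\<forall>i<?N. \<rho> $$ (i,i) = \<rho>' $$ (i,i)" and y: "y < ?N" for \<rho> \<rho>'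
  proof -
    have "E \<rho> $$ (y,y) = (\<Sum>i<Nn. complex_of_real (p i) * F i \<rho> $$ (y, y))" using Eeq rho y by simp
    also have "\<dots> = (\<Sum>i<Nn. complex_of_real (p i) * F i \<rho>' $$ (y, y))"
      by (intro sum.cong refl) (use subch_props(1)[OF _ rho rho' same y] pF in auto)
    also have "\<dots> = E \<rho>' $$ (y,y)" using Eeq rho' y by simp
    finally show ?thesis .
  qed
  show "E \<rho> \<in> carrier_mat ?N ?N \<and> adj (E \<rho>) = E \<rho> \<and> mtrace (E \<rho>) = 1" if dens: "density ?N \<rho>" for \<rho>
  proof (intro conjI)
    have rho: "\<rho> \<in> carrier_mat ?N ?N" using dens unfolding density_def by auto
    have Fi: "F i \<rho> \<in> carrier_mat ?N ?N \<and> adj (F i \<rho>) = F i \<rho> \<and> mtrace (F i \<rho>) = 1" if "i < Nn" for i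
      using subch_props(2)[OF _ dens] pF that by blast
    have Ei: "E \<rho> $$ (a,b) = (\<Sum>i<Nn. complex_of_real (p i) * F i \<rho> $$ (a, b))" if "a < ?N" "b < ?N" for a b
      using Eeq rho that by simp
    show Ec: "E \<rho> \<in> carrier_mat ?N ?N" using Eeq rho by simp
    show "adj (E \<rho>) = E \<rho>"
    proof (rule eq_matI)
      fix a b assume "a < dim_row (E \<rho>)" "b < dim_col (E \<rho>)"
      then have a: "a < ?N" and b: "b < ?N" using Ec by auto
      have "adj (E \<rho>) $$ (a,b) = cnj (E \<rho> $$ (b,a))" using Ec a b by simp
      also have "\<dots> = (\<Sum>i<Nn. complex_of_real (p i) * cnj (F i \<rho> $$ (b, a)))" using Ei[OF b a] by simp
      also have "\<dots> = (\<Sum>i<Nn. complex_of_real (p i) * F i \<rho> $$ (a, b))"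
      proof (intro sum.cong refl)
        fix i assume "i \<in> {..<Nn}"
        then have i: "i < Nn" by simp
        have Fc: "F i \<rho> \<in> carrier_mat ?N ?N" and hF: "adj (F i \<rho>) = F i \<rho>" using Fi[OF i] by auto
        have "cnj (F i \<rho> $$ (b, a)) = adj (F i \<rho>) $$ (a,b)" using Fc a b by simp
        also have "\<dots> = F i \<rho> $$ (a,b)" by (simp only: hF)
        finally show "complex_of_real (p i) * cnj (F i \<rho> $$ (b, a)) = complex_of_real (p i) * F i \<rho> $$ (a, b)"
          by simp
      qed
      also have "\<dots> = E \<rho> $$ (a,b)" using Ei[OF a b] by simp
      finally show "adj (E \<rho>) $$ (a,b) = E \<rho> $$ (a,b)" .
    qed (use Ec in auto)
    have "mtrace (E \<rho>) = (\<Sum>y<?N. \<Sum>i<Nn. complex_of_real (p i) * F i \<rho> $$ (y, y))"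
      unfolding mtrace_def using Ec Ei by simp
    also have "\<dots> = (\<Sum>i<Nn. complex_of_real (p i) * (\<Sum>y<?N. F i \<rho> $$ (y, y)))"
      by (subst sum.swap) (simp add: sum_distrib_left)
    also have "\<dots> = (\<Sum>i<Nn. complex_of_real (p i))"
    proof (intro sum.cong refl)
      fix i assume "i \<in> {..<Nn}"
      then have i: "i < Nn" by simp
      have Fc: "F i \<rho> \<in> carrier_mat ?N ?N" using Fi[OF i] by auto
      have "(\<Sum>y<?N. F i \<rho> $$ (y, y)) = mtrace (F i \<rho>)" using carrier_matD(1)[OF Fc] by (simp add: mtrace_def)
      then show "complex_of_real (p i) * (\<Sum>y<?N. F i \<rho> $$ (y, y)) = complex_of_real (p i)" using Fi[OF i] by simp
    qed
    also have "\<dots> = 1" using ps by (metis of_real_1 of_real_sum)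
    finally show "mtrace (E \<rho>) = 1" .
  qed
qed

lemma hn_dim[simp]: "dim_row (hadamard_n n) = 2^n" "dim_col (hadamard_n n) = 2^n"
  using hn_carrier[of n] by (auto simp del: hn_carrier)

definition rhox :: "nat \<Rightarrow> nat \<Rightarrow> complex mat" where
  "rhox n x = hadamard_n n * ketbra (2^n) x * adj (hadamard_n n)"

lemma rhox_carrier: "rhox n x \<in> carrier_mat (2^n) (2^n)"
  unfolding rhox_def by (rule mult_carrier_mat[OF mult_carrier_mat[OF hn_carrier ketbra_carrier] adj_carrier[OF hn_carrier]])

lemma rhox_entry: assumes x: "x < 2^n" and i: "i < 2^n" and j: "j < 2^n"
  shows "rhox n x $$ (i,j) = hadamard_n n $$ (i,x) * cnj (hadamard_n n $$ (j,x))"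
proof -
  let ?H = "hadamard_n n" and ?K = "ketbra (2^n) x"
  have HK: "(?H * ?K) $$ (i,t) = (if t = x then ?H $$ (i,x) else 0)" if t: "t < 2^n" for t
  proof -
    have "(?H * ?K) $$ (i,t) = (\<Sum>s<2^n. ?H $$ (i,s) * ?K $$ (s,t))" by (rule mult_entry[OF hn_carrier ketbra_carrier i t])
    also have "\<dots> = (\<Sum>s<2^n. if s = x then (if t = x then ?H $$ (i,x) else 0) else 0)"
      by (intro sum.cong refl) (use t in \<open>auto simp: ketbra_def\<close>)
    also have "\<dots> = (if t = x then ?H $$ (i,x) else 0)" using x by simp
    finally show ?thesis .
  qed
  have "rhox n x $$ (i,j) = (\<Sum>t<2^n. (?H * ?K) $$ (i,t) * adj ?H $$ (t,j))"
    unfolding rhox_def by (rule mult_entry[OF mult_carrier_mat[OF hn_carrier ketbra_carrier] adj_carrier[OF hn_carrier] i j])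
  also have "\<dots> = (\<Sum>t<2^n. if t = x then ?H $$ (i,x) * cnj (?H $$ (j,x)) else 0)"
    by (intro sum.cong refl) (use j in \<open>auto simp: HK\<close>)
  also have "\<dots> = ?H $$ (i,x) * cnj (?H $$ (j,x))" using x by simp
  finally show ?thesis .
qed

lemma rhox_diag: assumes x: "x < 2^n" and i: "i < 2^n"
  shows "rhox n x $$ (i,i) = complex_of_real (1 / 2^n)"
proof -
  have "rhox n x $$ (i,i) = complex_of_real ((cmod (hadamard_n n $$ (i,x)))^2)"
    using rhox_entry[OF x i i] by (simp only: complex_norm_square)
  also have "\<dots> = complex_of_real (1 / 2^n)" using hn_norm[OF i x] by simp
  finally show ?thesis .
qed

lemma rhox_density: assumes x: "x < 2^n" shows "density (2^n) (rhox n x)"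
  unfolding density_def
proof (intro conjI allI)
  let ?H = "hadamard_n n"
  show "rhox n x \<in> carrier_mat (2^n) (2^n)" by (rule rhox_carrier)
  show "adj (rhox n x) = rhox n x"
    unfolding rhox_def using adj_sandwich[OF hn_carrier ketbra_carrier] by simp
  fix v :: "nat \<Rightarrow> complex"
  define s where "s = (\<Sum>i<2^n. cnj (v i) * ?H $$ (i,x))"
  have "(\<Sum>i<2^n. \<Sum>j<2^n. cnj (v i) * rhox n x $$ (i, j) * v j) = (\<Sum>i<2^n. \<Sum>j<2^n. (cnj (v i) * ?H $$ (i,x)) * (v j * cnj (?H $$ (j,x))))"
    by (intro sum.cong refl) (simp add: rhox_entry[OF x] mult_ac)
  also have "\<dots> = s * cnj s"
  proof -
    have cs: "cnj s = (\<Sum>j<2^n. v j * cnj (?H $$ (j,x)))" unfolding s_def by (simp add: cnj_sum)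
    show ?thesis unfolding cs unfolding s_def by (rule sum_product[symmetric])
  qed
  also have "\<dots> = complex_of_real ((cmod s)^2)" by (rule complex_norm_square[symmetric])
  finally show "0 \<le> Re (\<Sum>i<2^n. \<Sum>j<2^n. cnj (v i) * rhox n x $$ (i, j) * v j)" by simp
next
  have "mtrace (rhox n x) = (\<Sum>i<(2::nat)^n. complex_of_real (1 / 2^n))"
    unfolding mtrace_def using rhox_carrier[of n x] by (intro sum.cong) (auto simp: rhox_diag[OF x])
  also have "\<dots> = 1" by simp
  finally show "mtrace (rhox n x) = 1" .
qed

lemma V_rhox: assumes x: "x < 2^n"
  shows "hadamard_n n * rhox n x * adj (hadamard_n n) = ketbra (2^n) x"
proof -
  let ?H = "hadamard_n n"
  have "?H * rhox n x * adj ?H = (?H * ?H) * ketbra (2^n) x * (adj ?H * adj ?H)"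
    unfolding rhox_def by (rule assoc5[OF hn_carrier hn_carrier ketbra_carrier adj_carrier[OF hn_carrier] adj_carrier[OF hn_carrier]])
  also have "\<dots> = ketbra (2^n) x"
    by (simp add: hn_adj hn_sq left_mult_one_mat[OF ketbra_carrier] right_mult_one_mat[OF ketbra_carrier])
  finally show ?thesis .
qed

theorem theorem2:
  fixes n :: nat and \<epsilon> :: real and E :: "complex mat \<Rightarrow> complex mat"
  assumes "0 \<le> \<epsilon>" and "\<epsilon> < 1 - 1 / 2 ^ n"
    and "implementable n E"
  shows "\<not> approximates n \<epsilon> E (\<lambda>\<rho>. hadamard_n n * \<rho> * adj (hadamard_n n))"
proof
  assume app: "approximates n \<epsilon> E (\<lambda>\<rho>. hadamard_n n * \<rho> * adj (hadamard_n n))"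
  let ?N = "2^n :: nat"
  have N0: "0 < ?N" by simp
  define d where "d j = E (rhox n 0) $$ (j,j)" for j
  have dx: "E (rhox n x) $$ (j,j) = d j" if x: "x < ?N" and j: "j < ?N" for x j
    unfolding d_def
  proof (rule impl_props(1)[OF assms(3) rhox_carrier rhox_carrier _ j])
    show "\<forall>i<?N. rhox n x $$ (i, i) = rhox n 0 $$ (i, i)" using rhox_diag[OF x] rhox_diag[OF N0] by simp
  qed
  have E0: "E (rhox n 0) \<in> carrier_mat ?N ?N \<and> adj (E (rhox n 0)) = E (rhox n 0) \<and> mtrace (E (rhox n 0)) = 1"
    by (rule impl_props(2)[OF assms(3) rhox_density[OF N0]])
  have sumd: "(\<Sum>j<?N. d j) = 1"
  proof -
    have "dim_row (E (rhox n 0)) = ?N" using E0 by auto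
    then show ?thesis using E0 unfolding d_def mtrace_def by simp
  qed
  obtain x where x: "x < ?N" and dxle: "Re (d x) \<le> 1 / 2^n"
  proof (rule ccontr)
    assume "\<not> thesis"
    then have gt: "\<forall>x<?N. 1 / 2^n < Re (d x)" using that by (meson not_le)
    have "(\<Sum>j<?N. (1 / 2^n :: real)) < (\<Sum>j<?N. Re (d j))"
      by (rule sum_strict_mono) (use gt in \<open>auto simp: lessThan_empty_iff\<close>)
    also have "(\<Sum>j<?N. Re (d j)) = Re (\<Sum>j<?N. d j)" by (simp add: Re_sum)
    also have "\<dots> = 1" using sumd by simp
    finally show False by simp
  qed
  have Ex: "E (rhox n x) \<in> carrier_mat ?N ?N \<and> adj (E (rhox n x)) = E (rhox n x) \<and> mtrace (E (rhox n x)) = 1"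
    by (rule impl_props(2)[OF assms(3) rhox_density[OF x]])
  then have Exc: "E (rhox n x) \<in> carrier_mat ?N ?N" and hEx: "adj (E (rhox n x)) = E (rhox n x)" by auto
  define M where "M = E (rhox n x) - ketbra ?N x"
  have Mc: "M \<in> carrier_mat ?N ?N" unfolding M_def by (rule minus_carrier_mat[OF ketbra_carrier])
  have hM: "adj M = M" unfolding M_def using adj_minus[OF Exc ketbra_carrier] hEx by simp
  have Mjj: "M $$ (j,j) = d j - (if j = x then 1 else 0)" if j: "j < ?N" for j
    unfolding M_def using Exc j dx[OF x j] by (simp add: ketbra_def)
  have s1: "(\<Sum>j<?N. cmod (M $$ (j,j))) = cmod (M $$ (x,x)) + (\<Sum>j\<in>{..<?N} - {x}. cmod (M $$ (j,j)))"
    by (rule sum.remove) (use x in auto)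
  have s2: "(\<Sum>j\<in>{..<?N} - {x}. cmod (M $$ (j,j))) = (\<Sum>j\<in>{..<?N} - {x}. cmod (d j))"
    by (intro sum.cong refl) (auto simp: Mjj)
  have s3: "cmod (\<Sum>j\<in>{..<?N} - {x}. d j) \<le> (\<Sum>j\<in>{..<?N} - {x}. cmod (d j))" by (rule norm_sum)
  have s4: "(\<Sum>j\<in>{..<?N} - {x}. d j) = 1 - d x"
  proof -
    have "(\<Sum>j<?N. d j) = d x + (\<Sum>j\<in>{..<?N} - {x}. d j)" by (rule sum.remove) (use x in auto)
    then show ?thesis using sumd by (simp add: algebra_simps)
  qed
  have s5: "cmod (M $$ (x,x)) = cmod (1 - d x)" using Mjj[OF x] by (simp add: norm_minus_commute)
  have "2 * cmod (1 - d x) \<le> (\<Sum>j<?N. cmod (M $$ (j,j)))"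
    using s1 s2 s3 s4 s5 by simp
  moreover have "1 - Re (d x) \<le> cmod (1 - d x)" using complex_Re_le_cmod[of "1 - d x"] by simp
  moreover have "(\<Sum>j<?N. cmod (M $$ (j,j))) \<le> trace_norm M" by (rule diag_le_trace_norm[OF Mc hM])
  ultimately have tn0: "2 * (1 - Re (d x)) \<le> trace_norm M"
    by (meson order_trans mult_left_mono zero_le_numeral)
  have "2 * (1 - 1 / 2^n) \<le> 2 * (1 - Re (d x))" using dxle by simp
  then have tn: "2 * (1 - 1 / 2^n) \<le> trace_norm M" using tn0 by (rule order_trans)
  have "trace_norm (E (rhox n x) - hadamard_n n * rhox n x * adj (hadamard_n n)) / 2 \<le> \<epsilon>"
    using app rhox_density[OF x] unfolding approximates_def by blast
  then have "trace_norm M / 2 \<le> \<epsilon>" unfolding M_def V_rhox[OF x] .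
  moreover have "\<And>t e q :: real. t / 2 \<le> e \<Longrightarrow> 2 * (1 - q) \<le> t \<Longrightarrow> e < 1 - q \<Longrightarrow> False"
    by (simp add: field_simps)
  ultimately show False using tn assms(2) by blast
qed

end
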